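(* Let $\mathcal D$ be any probability distribution over $\mathbb R$ and let $(N,u)\sim H(n,\mathcal D)$ be a random additively separable hedonic game. Then $$\lim_{n\to\infty}\mathbb P\big((N,u)\text{ admits a contractually Nash-stable partition}\big)=1.$$
   Context: Additively separable hedonic game: a finite agent set $N$ and utilities $u_a(b)\in\mathbb R$ for ordered pairs $a\ne b$; for a coalition $C\ni a$, $u_a(C)=\sum_{b\in C\setminus\{a\}}u_a(b)$ (empty sum $0$). Random model $H(n,\mathcal D)$: $|N|=n$ and all $u_a(b)$, $a\ne b$, i.i.d. from $\mathcal D$. For a partition $\pi$, $\pi(a)$ is $a$'s coalition. A Nash deviation of $a$ is a move of $a$ alone to another coalition $C\in\pi$ or to a new singleton, such that $a$'s new coalition gives $a$ strictly higher utility. $\mathrm{FavorIn}(C,a)=\{b\in C\setminus\{a\}: u_b(C\cup\{a\})>u_b(C\setminus\{a\})\}$. A contractual deviation is a Nash deviation by $a$ with $\mathrm{FavorIn}(\pi(a),a)=\emptyset$; $\pi$ is contractually Nash-stable if no contractual deviation exists. *)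

theory Defs
  imports "HOL-Probability.Probability" "HOL-Library.Disjoint_Sets"
begin

text \<open>Agents are the natural numbers 0,...,n-1. A utility profile is a function
  u :: nat \<times> nat \<Rightarrow> real, where u (a,b) is the utility agent a derives from b;
  only the values at pairs (a,b) with a \<noteq> b, a,b < n are relevant.\<close>

definition coal_util :: "(nat \<times> nat \<Rightarrow> real) \<Rightarrow> nat \<Rightarrow> nat set \<Rightarrow> real" where
  "coal_util u a C = (\<Sum>b\<in>C - {a}. u (a, b))"

definition coalition_of :: "nat set set \<Rightarrow> nat \<Rightarrow> nat set" where
  "coalition_of \<pi> a = (THE C. C \<in> \<pi> \<and> a \<in> C)"

definition favor_in :: "(nat \<times> nat \<Rightarrow> real) \<Rightarrow> nat set \<Rightarrow> nat \<Rightarrow> nat set" where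
  "favor_in u C a = {b \<in> C - {a}. coal_util u b (C \<union> {a}) > coal_util u b (C - {a})}"

text \<open>Nash deviation of agent a to a coalition C of \<pi> other than its own, or to a new
  singleton (represented by C = {}); the new coalition is C \<union> {a}.\<close>
definition nash_deviation :: "(nat \<times> nat \<Rightarrow> real) \<Rightarrow> nat set set \<Rightarrow> nat \<Rightarrow> nat set \<Rightarrow> bool" where
  "nash_deviation u \<pi> a C \<longleftrightarrow>
     C \<in> insert {} (\<pi> - {coalition_of \<pi> a}) \<and>
     coal_util u a (C \<union> {a}) > coal_util u a (coalition_of \<pi> a)"

definition contractual_deviation :: "(nat \<times> nat \<Rightarrow> real) \<Rightarrow> nat set set \<Rightarrow> nat \<Rightarrow> nat set \<Rightarrow> bool" where
  "contractual_deviation u \<pi> a C \<longleftrightarrow>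
     nash_deviation u \<pi> a C \<and> favor_in u (coalition_of \<pi> a) a = {}"

definition contractually_nash_stable :: "nat set \<Rightarrow> (nat \<times> nat \<Rightarrow> real) \<Rightarrow> nat set set \<Rightarrow> bool" where
  "contractually_nash_stable N u \<pi> \<longleftrightarrow>
     partition_on N \<pi> \<and> \<not> (\<exists>a\<in>N. \<exists>C. contractual_deviation u \<pi> a C)"

definition agent_pairs :: "nat \<Rightarrow> (nat \<times> nat) set" where
  "agent_pairs n = {(a, b). a < n \<and> b < n \<and> a \<noteq> b}"

definition random_asg :: "real measure \<Rightarrow> nat \<Rightarrow> (nat \<times> nat \<Rightarrow> real) measure" where
  "random_asg D n = PiM (agent_pairs n) (\<lambda>_. D)"

end

theory Submission
  imports Defs
begin

lemma grand_stable:
  assumes n: "n \<ge> 1" and h: "\<forall>a<n. \<exists>b<n. b \<noteq> a \<and> u (b, a) > 0"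
  shows "contractually_nash_stable {0..<n} u {{0..<n}}"
proof -
  let ?N = "{0..<n::nat}"
  have ne: "?N \<noteq> {}" using n by auto
  have part: "partition_on ?N {?N}" using ne by (auto simp: partition_on_def disjoint_def)
  have co: "coalition_of {?N} a = ?N" if "a \<in> ?N" for a
    unfolding coalition_of_def by (rule the_equality) (use that in auto)
  have "favor_in u ?N a \<noteq> {}" if a: "a \<in> ?N" for a
  proof -
    obtain b where b: "b < n" "b \<noteq> a" "u (b, a) > 0" using h a by auto
    have "coal_util u b (?N \<union> {a}) = coal_util u b (?N - {a}) + u (b, a)"
    proof -
      have e: "?N \<union> {a} - {b} = insert a (?N - {a} - {b})" using a b by auto
      show ?thesis unfolding coal_util_def e by (subst sum.insert) auto
    qed
    then have "b \<in> favor_in u ?N a" using b by (auto simp: favor_in_def)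
    then show ?thesis by auto
  qed
  then show ?thesis using part co
    by (auto simp: contractually_nash_stable_def contractual_deviation_def)
qed

lemma single_stable:
  assumes h: "\<forall>a<n. \<forall>b<n. a \<noteq> b \<longrightarrow> u (a, b) \<le> 0"
  shows "contractually_nash_stable {0..<n} u ((\<lambda>a. {a}) ` {0..<n})"
proof -
  let ?N = "{0..<n::nat}" let ?P = "(\<lambda>a. {a}) ` ?N"
  have part: "partition_on ?N ?P" by (auto simp: partition_on_def disjoint_def)
  have co: "coalition_of ?P a = {a}" if "a \<in> ?N" for a
    unfolding coalition_of_def by (rule the_equality) (use that in auto)
  have "\<not> nash_deviation u ?P a C" if a: "a \<in> ?N" for a C
  proof
    assume d: "nash_deviation u ?P a C"
    then have C: "C = {} \<or> (\<exists>c\<in>?N. c \<noteq> a \<and> C = {c})" and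
      gt: "coal_util u a (C \<union> {a}) > coal_util u a {a}"
      using co[OF a] by (auto simp: nash_deviation_def)
    have z: "coal_util u a {a} = 0" by (simp add: coal_util_def)
    from C show False
    proof
      assume "C = {}" then show False using gt z by simp
    next
      assume "\<exists>c\<in>?N. c \<noteq> a \<and> C = {c}"
      then obtain c where c: "c \<in> ?N" "c \<noteq> a" "C = {c}" by auto
      have "{c} \<union> {a} - {a} = {c}" using c by auto
      then have "coal_util u a (C \<union> {a}) = u (a, c)" using c by (simp add: coal_util_def)
      then show False using gt z h a c by fastforce
    qed
  qed
  then show ?thesis using part
    by (auto simp: contractually_nash_stable_def contractual_deviation_def)
qed


lemma comp_meas:
  assumes "sets D = sets borel"
  shows "(\<lambda>u. u i) \<in> borel_measurable (PiM I (\<lambda>_. D))"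
proof (cases "i \<in> I")
  case True
  have "(\<lambda>u. u i) \<in> measurable (PiM I (\<lambda>_. D)) D" using True by measurable
  then show ?thesis using assms measurable_cong_sets by blast
next
  case False
  have "(\<lambda>_. undefined) \<in> borel_measurable (PiM I (\<lambda>_. D))" by simp
  then show ?thesis
    by (rule measurable_cong[THEN iffD1, rotated]) (use False in \<open>auto simp: space_PiM PiE_def extensional_def\<close>)
qed

context fixes D :: "real measure" assumes D: "sets D = sets borel" begin

lemma cu_meas[measurable]:
  shows "(\<lambda>u. coal_util u a S) \<in> borel_measurable (PiM I (\<lambda>_. D))"
  unfolding coal_util_def using comp_meas[OF D] by (intro borel_measurable_sum) auto

lemma event_meas:
  shows "{u \<in> space (PiM I (\<lambda>_. D)). \<exists>\<pi>. contractually_nash_stable {0..<n} u \<pi>} \<in> sets (PiM I (\<lambda>_. D))"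
proof -
  let ?M = "PiM I (\<lambda>_. D)" let ?N = "{0..<n::nat}"
  let ?P = "{\<pi>. partition_on ?N \<pi>}"
  have finP: "finite ?P"
    by (rule finite_subset[of _ "Pow (Pow ?N)"]) (auto simp: partition_on_def)
  have "Measurable.pred ?M (\<lambda>u. contractually_nash_stable ?N u \<pi>)" if p: "\<pi> \<in> ?P" for \<pi>
  proof -
    have finpi: "finite \<pi>" 
    proof (rule finite_subset)
      show "\<pi> \<subseteq> Pow ?N" using p by (auto simp: partition_on_def)
    qed simp
    have eq: "contractually_nash_stable ?N u \<pi> \<longleftrightarrow>
       \<not> (\<exists>a\<in>?N. \<exists>C\<in>insert {} (\<pi> - {coalition_of \<pi> a}).
          coal_util u a (C \<union> {a}) > coal_util u a (coalition_of \<pi> a) \<and>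
          (\<forall>b. \<not> (b \<in> coalition_of \<pi> a - {a} \<and>
             coal_util u b (coalition_of \<pi> a \<union> {a}) > coal_util u b (coalition_of \<pi> a - {a}))))" for u
      using p by (auto simp: contractually_nash_stable_def contractual_deviation_def
          nash_deviation_def favor_in_def)
    have "Measurable.pred ?M (\<lambda>u. \<not> (\<exists>a\<in>?N. \<exists>C\<in>insert {} (\<pi> - {coalition_of \<pi> a}).
          coal_util u a (C \<union> {a}) > coal_util u a (coalition_of \<pi> a) \<and>
          (\<forall>b. \<not> (b \<in> coalition_of \<pi> a - {a} \<and>
             coal_util u b (coalition_of \<pi> a \<union> {a}) > coal_util u b (coalition_of \<pi> a - {a})))))"
      using finpi by measurable (auto simp: finpi)
    then show ?thesis using eq by simp
  qed
  then have "Measurable.pred ?M (\<lambda>u. \<exists>\<pi>\<in>?P. contractually_nash_stable ?N u \<pi>)"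
    using finP by (intro pred_intros_finite(4))
  moreover have "(\<exists>\<pi>\<in>?P. contractually_nash_stable ?N u \<pi>) \<longleftrightarrow> (\<exists>\<pi>. contractually_nash_stable ?N u \<pi>)" for u
    by (auto simp: contractually_nash_stable_def)
  ultimately show ?thesis by (simp add: pred_def)
qed

end


lemma fin_pairs: "finite (agent_pairs n)"
  by (rule finite_subset[of _ "{0..<n} \<times> {0..<n}"]) (auto simp: agent_pairs_def)

lemma pps: "prob_space D \<Longrightarrow> product_prob_space (\<lambda>_. D)"
  by (simp add: product_prob_space_def product_prob_space_axioms_def product_sigma_finite_def
      prob_space_imp_sigma_finite)

lemma lim_aux:
  assumes "0 \<le> (q::real)" "q < 1"
  shows "(\<lambda>n. 1 - real n * q ^ (n - 1)) \<longlonglongrightarrow> 1"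
proof -
  have "(\<lambda>n. real (Suc n) * q ^ (Suc n - 1)) \<longlonglongrightarrow> 0"
  proof -
    have "(\<lambda>n. real n * q ^ n + q ^ n) \<longlonglongrightarrow> 0 + 0"
      using assms by (intro tendsto_add powser_times_n_limit_0 LIMSEQ_power_zero) auto
    then show ?thesis by (simp add: algebra_simps)
  qed
  then have "(\<lambda>n. real n * q ^ (n - 1)) \<longlonglongrightarrow> 0" by (rule LIMSEQ_imp_Suc)
  then have "(\<lambda>n. 1 - real n * q ^ (n - 1)) \<longlonglongrightarrow> 1 - 0" by (intro tendsto_diff) auto
  then show ?thesis by simp
qed

theorem proposition1:
  fixes D :: "real measure"
  assumes "prob_space D" and "sets D = sets borel"
  shows "(\<lambda>n. measure (random_asg D n)
            {u \<in> space (random_asg D n). \<exists>\<pi>. contractually_nash_stable {0..<n} u \<pi>})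
         \<longlonglongrightarrow> 1"
proof -
  note D = assms(2)
  interpret PD: prob_space D by (rule assms(1))
  define q where "q = measure D {..0::real}"
  have Z: "{..0::real} \<in> sets D" using D by simp
  have SD: "space D = UNIV" using sets_eq_imp_space_eq[OF D] by simp
  define Ev where "Ev n = {u \<in> space (random_asg D n). \<exists>\<pi>. contractually_nash_stable {0..<n} u \<pi>}" for n
  have Evm: "Ev n \<in> sets (random_asg D n)" for n
    unfolding Ev_def random_asg_def by (rule event_meas[OF D])
  have PS: "prob_space (random_asg D n)" for n
    unfolding random_asg_def by (intro prob_space_PiM assms(1))
  have le1: "measure (random_asg D n) (Ev n) \<le> 1" for n
    using prob_space.prob_le_1[OF PS] by blast
  show ?thesis unfolding Ev_def[symmetric]
  proof (cases "q = 1")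
    case True
    have "measure (random_asg D n) (Ev n) = 1" for n
    proof -
      let ?I = "agent_pairs n"
      let ?A = "PiE ?I (\<lambda>_. {..0::real})"
      have "measure (random_asg D n) (prod_emb ?I (\<lambda>_. D) ?I ?A) = (\<Prod>i\<in>?I. measure D {..0})"
        unfolding random_asg_def
        by (rule product_prob_space.measure_PiM_emb[OF pps[OF assms(1)]]) (auto simp: fin_pairs Z)
      also have "\<dots> = 1" using True q_def by simp
      also have "prod_emb ?I (\<lambda>_. D) ?I ?A = ?A"
        by (rule prod_emb_PiE_same_index) (use Z sets.sets_into_space in blast)
      finally have m1: "measure (random_asg D n) ?A = 1" .
      have "?A \<subseteq> Ev n"
      proof
        fix u assume u: "u \<in> ?A"
        have "u \<in> space (random_asg D n)"
          using u by (auto simp: random_asg_def space_PiM PiE_def Pi_def SD)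
        moreover have "\<forall>a<n. \<forall>b<n. a \<noteq> b \<longrightarrow> u (a, b) \<le> 0"
          using u by (auto simp: agent_pairs_def)
        ultimately show "u \<in> Ev n" unfolding Ev_def using single_stable by blast
      qed
      then have "measure (random_asg D n) ?A \<le> measure (random_asg D n) (Ev n)"
        using Evm by (intro finite_measure.finite_measure_mono prob_space.axioms(1)[OF PS]) auto
      then show ?thesis using m1 le1[of n] by simp
    qed
    then show "(\<lambda>n. measure (random_asg D n) (Ev n)) \<longlonglongrightarrow> 1" by simp
  next
    case False
    have q0: "0 \<le> q" unfolding q_def by simp
    have q1: "q < 1" using False PD.prob_le_1 q_def by (metis order_le_less)
    have low: "1 - real n * q ^ (n - 1) \<le> measure (random_asg D n) (Ev n)" if n1: "n \<ge> 1" for n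
    proof -
      let ?I = "agent_pairs n"
      let ?M = "random_asg D n"
      define J where "J a = (\<lambda>b. (b, a)) ` ({0..<n} - {a})" for a
      define E where "E a = prod_emb ?I (\<lambda>_. D) (J a) (PiE (J a) (\<lambda>_. {..0::real}))" for a
      have JI: "J a \<subseteq> ?I" if "a < n" for a using that by (auto simp: J_def agent_pairs_def)
      have cJ: "card (J a) = n - 1" if "a < n" for a
      proof -
        have "card (J a) = card ({0..<n} - {a})"
          unfolding J_def by (rule card_image) (auto simp: inj_on_def)
        then show ?thesis using that by simp
      qed
      have mE: "measure ?M (E a) = q ^ (n - 1)" if "a < n" for a
      proof -
        have "measure ?M (E a) = (\<Prod>i\<in>J a. measure D {..0})"
          unfolding random_asg_def E_def
          by (rule product_prob_space.measure_PiM_emb[OF pps[OF assms(1)]])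
             (use JI[OF that] Z in \<open>auto simp: J_def\<close>)
        then show ?thesis using cJ[OF that] q_def by simp
      qed
      have sE: "E a \<in> sets ?M" if "a < n" for a
        unfolding E_def random_asg_def
        by (rule sets_PiM_I) (use JI[OF that] Z in \<open>auto simp: J_def\<close>)
      have sub: "space ?M - (\<Union>a\<in>{0..<n}. E a) \<subseteq> Ev n"
      proof
        fix u assume u: "u \<in> space ?M - (\<Union>a\<in>{0..<n}. E a)"
        have "\<exists>b<n. b \<noteq> a \<and> u (b, a) > 0" if a: "a < n" for a
        proof (rule ccontr)
          assume "\<not> ?thesis"
          then have "\<forall>j\<in>J a. u j \<le> 0" unfolding J_def by (auto simp: not_less) (meson not_le)
          then have "u \<in> E a" using u
            by (auto simp: E_def prod_emb_def random_asg_def space_PiM PiE_def extensional_def)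
          then show False using u a by auto
        qed
        then show "u \<in> Ev n" unfolding Ev_def using u grand_stable[OF n1] by blast
      qed
      have "measure ?M (\<Union>a\<in>{0..<n}. E a) \<le> (\<Sum>a\<in>{0..<n}. measure ?M (E a))"
        using sE by (intro finite_measure.finite_measure_subadditive_finite prob_space.axioms(1)[OF PS]) auto
      also have "\<dots> = real n * q ^ (n - 1)" using mE by simp
      finally have ub: "measure ?M (\<Union>a\<in>{0..<n}. E a) \<le> real n * q ^ (n - 1)" .
      have "measure ?M (space ?M - (\<Union>a\<in>{0..<n}. E a)) = 1 - measure ?M (\<Union>a\<in>{0..<n}. E a)"
        using sE by (intro prob_space.prob_compl[OF PS]) auto
      moreover have "measure ?M (space ?M - (\<Union>a\<in>{0..<n}. E a)) \<le> measure ?M (Ev n)"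
        using sub Evm by (intro finite_measure.finite_measure_mono prob_space.axioms(1)[OF PS]) auto
      ultimately show ?thesis using ub by linarith
    qed
    show "(\<lambda>n. measure (random_asg D n) (Ev n)) \<longlonglongrightarrow> 1"
    proof (rule tendsto_sandwich[OF _ _ lim_aux[OF q0 q1] tendsto_const])
      show "\<forall>\<^sub>F n in sequentially. 1 - real n * q ^ (n - 1) \<le> measure (random_asg D n) (Ev n)"
        using low by (intro eventually_sequentiallyI[of 1]) auto
      show "\<forall>\<^sub>F n in sequentially. measure (random_asg D n) (Ev n) \<le> 1"
        using le1 by simp
    qed
  qed
qed

end
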